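(* Let $p,q$ be distinct primes and $n\geqslant1$. Then the width of $C_{p^nq}$ equals $n+1$.
   Context: For a finite group $G$, an arrow is a pair $(H,K)$ of subgroups with $H\leqslant K$; identity arrows are those with $H=K$. A $G$-transfer system is a set of arrows containing all identities and closed under composition ($(H,K),(K,L)\Rightarrow(H,L)$), conjugation ($(H,K)\Rightarrow(gHg^{-1},gKg^{-1})$) and restriction ($(H,K)$ and $L\leqslant K\Rightarrow(H\cap L,L)$). For a set $S$ of non-identity arrows, $\langle S\rangle$ is the smallest transfer system containing $S$. A minimal generating set of a transfer system $\mathsf{T}$ is a set $S\subseteq\mathsf{T}$ of non-identity arrows with $\langle S\rangle=\mathsf{T}$ and $\langle S\setminus\{s\}\rangle\neq\mathsf{T}$ for all $s\in S$; all such have the same cardinality $\mathfrak{m}(\mathsf{T})$. The width of $G$ is $\mathfrak{m}$ of the complete transfer system (consisting of all arrows). *)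

theory Defs
  imports "HOL-Algebra.Algebra"
begin

definition arrows :: "('a, 'b) monoid_scheme \<Rightarrow> ('a set \<times> 'a set) set" where
  "arrows G = {(H, K). subgroup H G \<and> subgroup K G \<and> H \<subseteq> K}"

definition conj_set :: "('a, 'b) monoid_scheme \<Rightarrow> 'a \<Rightarrow> 'a set \<Rightarrow> 'a set" where
  "conj_set G g H = (\<lambda>h. g \<otimes>\<^bsub>G\<^esub> h \<otimes>\<^bsub>G\<^esub> inv\<^bsub>G\<^esub> g) ` H"

definition transfer_system :: "('a, 'b) monoid_scheme \<Rightarrow> ('a set \<times> 'a set) set \<Rightarrow> bool" where
  "transfer_system G T \<longleftrightarrow>
     T \<subseteq> arrows G \<and>
     (\<forall>H. subgroup H G \<longrightarrow> (H, H) \<in> T) \<and>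
     (\<forall>H K L. (H, K) \<in> T \<longrightarrow> (K, L) \<in> T \<longrightarrow> (H, L) \<in> T) \<and>
     (\<forall>H K g. (H, K) \<in> T \<longrightarrow> g \<in> carrier G \<longrightarrow> (conj_set G g H, conj_set G g K) \<in> T) \<and>
     (\<forall>H K L. (H, K) \<in> T \<longrightarrow> subgroup L G \<longrightarrow> L \<subseteq> K \<longrightarrow> (H \<inter> L, L) \<in> T)"

definition ts_generated :: "('a, 'b) monoid_scheme \<Rightarrow> ('a set \<times> 'a set) set \<Rightarrow> ('a set \<times> 'a set) set" where
  "ts_generated G S = \<Inter>{T. transfer_system G T \<and> S \<subseteq> T}"

definition minimal_generating_set ::
  "('a, 'b) monoid_scheme \<Rightarrow> ('a set \<times> 'a set) set \<Rightarrow> ('a set \<times> 'a set) set \<Rightarrow> bool" where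
  "minimal_generating_set G T S \<longleftrightarrow>
     S \<subseteq> T \<and> (\<forall>s\<in>S. fst s \<noteq> snd s) \<and> ts_generated G S = T \<and>
     (\<forall>s\<in>S. ts_generated G (S - {s}) \<noteq> T)"

(* m(T): the common cardinality of the minimal generating sets of T *)
definition mgen_card :: "('a, 'b) monoid_scheme \<Rightarrow> ('a set \<times> 'a set) set \<Rightarrow> nat" where
  "mgen_card G T = card (SOME S. minimal_generating_set G T S)"

definition width :: "('a, 'b) monoid_scheme \<Rightarrow> nat" where
  "width G = mgen_card G (arrows G)"

end

theory Submission
  imports Defs
begin


lemma conj_set_comm:
  fixes G (structure)
  assumes "comm_group G" "H \<subseteq> carrier G" "g \<in> carrier G"
  shows "conj_set G g H = H"
proof -
  interpret comm_group G by fact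
  have "g \<otimes> h \<otimes> inv g = h" if "h \<in> H" for h
  proof -
    have h: "h \<in> carrier G" using that assms by auto
    have "g \<otimes> h \<otimes> inv g = h \<otimes> g \<otimes> inv g" using h assms by (simp add: m_comm)
    also have "\<dots> = h" using h assms by (simp add: m_assoc)
    finally show ?thesis .
  qed
  then show ?thesis unfolding conj_set_def by (simp add: image_def)
qed

lemma arrows_subgroups: "(H, K) \<in> arrows G \<Longrightarrow> subgroup H G \<and> subgroup K G \<and> H \<subseteq> K"
  by (simp add: arrows_def)

lemma ts_arrows:
  assumes "comm_group G" shows "transfer_system G (arrows G)"
proof -
  interpret comm_group G by fact
  show ?thesis
    unfolding transfer_system_def
  proof (intro conjI allI impI)
    fix H K g assume "(H, K) \<in> arrows G" "g \<in> carrier G"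
    then show "(conj_set G g H, conj_set G g K) \<in> arrows G"
      using conj_set_comm[OF assms] by (simp add: arrows_def subgroup.subset)
  next
    fix H K L assume "(H, K) \<in> arrows G" "subgroup L G" "L \<subseteq> K"
    then show "(H \<inter> L, L) \<in> arrows G"
      by (auto simp: arrows_def intro: subgroups_Inter_pair)
  qed (auto simp: arrows_def)
qed

lemma ts_generated_least:
  "transfer_system G T \<Longrightarrow> S \<subseteq> T \<Longrightarrow> ts_generated G S \<subseteq> T"
  unfolding ts_generated_def by blast

lemma ts_generated_ts:
  assumes "comm_group G" "S \<subseteq> arrows G"
  shows "transfer_system G (ts_generated G S)"
proof -
  have ne: "arrows G \<in> {T. transfer_system G T \<and> S \<subseteq> T}" using ts_arrows[OF assms(1)] assms(2) by blast
  show ?thesis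
    unfolding transfer_system_def
  proof (intro conjI allI impI)
    show "ts_generated G S \<subseteq> arrows G" using ne unfolding ts_generated_def by blast
  next
    fix H assume "subgroup H G" then show "(H, H) \<in> ts_generated G S"
      unfolding ts_generated_def transfer_system_def by blast
  next
    fix H K L assume "(H, K) \<in> ts_generated G S" "(K, L) \<in> ts_generated G S"
    then show "(H, L) \<in> ts_generated G S"
      unfolding ts_generated_def transfer_system_def by blast
  next
    fix H K g assume "(H, K) \<in> ts_generated G S" "g \<in> carrier G"
    then show "(conj_set G g H, conj_set G g K) \<in> ts_generated G S"
      unfolding ts_generated_def transfer_system_def by blast
  next
    fix H K L assume "(H, K) \<in> ts_generated G S" "subgroup L G" "L \<subseteq> K"
    then show "(H \<inter> L, L) \<in> ts_generated G S"
      unfolding ts_generated_def transfer_system_def by blast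
  qed
qed

lemma ts_generated_sub: "S \<subseteq> ts_generated G S"
  unfolding ts_generated_def by blast

lemma ts_generated_arrows:
  assumes "comm_group G" "S \<subseteq> arrows G"
  shows "ts_generated G S \<subseteq> arrows G"
  using ts_generated_least[OF ts_arrows[OF assms(1)] assms(2)] .

lemma necessity:
  assumes cg: "comm_group G" and S: "S \<subseteq> arrows G" and gen: "ts_generated G S = arrows G"
    and A: "subgroup A G" and B: "subgroup B G" and AB: "A \<subseteq> B" "A \<noteq> B"
    and cover: "\<And>M. subgroup M G \<Longrightarrow> A \<subseteq> M \<Longrightarrow> M \<subseteq> B \<Longrightarrow> M = A \<or> M = B"
  shows "\<exists>H K. (H, K) \<in> S \<and> B \<subseteq> K \<and> H \<inter> B = A"
proof -
  interpret comm_group G by fact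
  define R where "R = {(H \<inter> L, L) | H K L. (H, K) \<in> S \<and> subgroup L G \<and> L \<subseteq> K}"
  define T where "T = {x. \<exists>U. x = (U, U) \<and> subgroup U G} \<union> R\<^sup>+"
  have Rarr: "R \<subseteq> arrows G"
    using S unfolding R_def arrows_def by (auto intro: subgroups_Inter_pair)
  have Rtarr: "(X1, Y) \<in> R\<^sup>+ \<Longrightarrow> (X1, Y) \<in> arrows G" for X1 Y
  proof (induction rule: trancl.induct)
    case (r_into_trancl a b) then show ?case using Rarr by auto
  next
    case (trancl_into_trancl a b c) then show ?case using Rarr by (auto simp: arrows_def)
  qed
  have Rres: "(Z, Y) \<in> R \<Longrightarrow> subgroup L G \<Longrightarrow> L \<subseteq> Y \<Longrightarrow> (Z \<inter> L, L) \<in> R" for Z Y L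
  proof -
    assume "(Z, Y) \<in> R" "subgroup L G" "L \<subseteq> Y"
    then obtain H K M where "(H, K) \<in> S" "subgroup M G" "M \<subseteq> K" "Z = H \<inter> M" "Y = M"
      unfolding R_def by blast
    then have "Z \<inter> L = H \<inter> L" "L \<subseteq> K" using \<open>L \<subseteq> Y\<close> by auto
    then show ?thesis unfolding R_def using \<open>subgroup L G\<close> \<open>(H, K) \<in> S\<close> by blast
  qed
  have Rtres: "(X1, Y) \<in> R\<^sup>+ \<Longrightarrow> \<forall>L. subgroup L G \<longrightarrow> L \<subseteq> Y \<longrightarrow> (X1 \<inter> L, L) \<in> R\<^sup>+" for X1 Y
  proof (induction rule: trancl_induct)
    case (base y) then show ?case using Rres by blast
  next
    case (step y z)
    show ?case
    proof (intro allI impI)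
      fix L assume L: "subgroup L G" "L \<subseteq> z"
      have zl: "(y \<inter> L, L) \<in> R" using Rres[OF step(2) L] .
      have yL: "subgroup (y \<inter> L) G" using Rtarr[OF step(1)] L by (auto simp: arrows_def intro: subgroups_Inter_pair)
      have "(X1 \<inter> (y \<inter> L), y \<inter> L) \<in> R\<^sup>+" using step(3) yL by blast
      moreover have "X1 \<inter> (y \<inter> L) = X1 \<inter> L" using Rtarr[OF step(1)] by (auto simp: arrows_def)
      ultimately show "(X1 \<inter> L, L) \<in> R\<^sup>+" using zl by auto
    qed
  qed
  have tsT: "transfer_system G T"
    unfolding transfer_system_def
  proof (intro conjI allI impI)
    show "T \<subseteq> arrows G" unfolding T_def using Rtarr by (auto simp: arrows_def)
  next
    fix H assume "subgroup H G" then show "(H, H) \<in> T" unfolding T_def by blast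
  next
    fix H K L assume "(H, K) \<in> T" "(K, L) \<in> T"
    then show "(H, L) \<in> T" unfolding T_def by (auto intro: trancl_trans)
  next
    fix H K g assume hk: "(H, K) \<in> T" "g \<in> carrier G"
    have "(H, K) \<in> arrows G" using hk(1) Rtarr unfolding T_def by (auto simp: arrows_def)
    then have "conj_set G g H = H" "conj_set G g K = K"
      using conj_set_comm[OF cg] hk(2) by (auto simp: arrows_def subgroup.subset)
    then show "(conj_set G g H, conj_set G g K) \<in> T" using hk(1) by simp
  next
    fix H K L assume hk: "(H, K) \<in> T" "subgroup L G" "L \<subseteq> K"
    show "(H \<inter> L, L) \<in> T"
    proof (cases "(H, K) \<in> R\<^sup>+")
      case True then show ?thesis using Rtres hk unfolding T_def by blast
    next
      case False
      then have "H = K" using hk(1) unfolding T_def by auto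
      then have "H \<inter> L = L" using hk(3) by auto
      then show ?thesis using hk(2) unfolding T_def by auto
    qed
  qed
  have "S \<subseteq> T"
  proof
    fix x assume "x \<in> S"
    then obtain H K where x: "x = (H, K)" "(H, K) \<in> S" by (cases x) auto
    then have "H \<subseteq> K" "subgroup K G" using S by (auto simp: arrows_def)
    then have "(H \<inter> K, K) \<in> R" unfolding R_def using x by blast
    then show "x \<in> T" using x \<open>H \<subseteq> K\<close> unfolding T_def by (auto simp: Int_absorb2)
  qed
  then have "arrows G \<subseteq> T" using ts_generated_least[OF tsT] gen by blast
  moreover have "(A, B) \<in> arrows G" using A B AB by (simp add: arrows_def)
  ultimately have "(A, B) \<in> R\<^sup>+" using AB unfolding T_def by auto
  have key: "(A, Y) \<in> R\<^sup>+ \<Longrightarrow> Y \<subseteq> B \<longrightarrow> Y \<noteq> A \<longrightarrow> (A, Y) \<in> R" for Y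
  proof (induction rule: trancl_induct)
    case (base y) then show ?case by blast
  next
    case (step y z)
    show ?case
    proof (intro impI)
      assume z: "z \<subseteq> B" "z \<noteq> A"
      have ya: "(A, y) \<in> arrows G" using Rtarr[OF step(1)] .
      have yz: "(y, z) \<in> arrows G" using Rarr step(2) by auto
      then have "y = A \<or> y = B" using cover ya z by (auto simp: arrows_def)
      then show "(A, z) \<in> R"
      proof
        assume "y = A" then show ?thesis using step(2) by simp
      next
        assume yB: "y = B"
        then have "z = B" using yz z by (auto simp: arrows_def)
        then show ?thesis using step(3) yB AB by simp
      qed
    qed
  qed
  have "(A, B) \<in> R" using key[OF \<open>(A, B) \<in> R\<^sup>+\<close>] AB by simp
  then show ?thesis unfolding R_def by blast
qed



lemma ppow_coprime:
  fixes p q :: nat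
  assumes "Factorial_Ring.prime p" "Factorial_Ring.prime q" "p \<noteq> q"
  shows "coprime (p ^ i) (q ^ j)"
  using primes_coprime[OF assms] by (simp add: coprime_power_left_iff coprime_power_right_iff)

lemma NT1:
  fixes p q d n :: nat
  assumes "Factorial_Ring.prime p" "Factorial_Ring.prime q" "d dvd p ^ n * q"
  shows "\<exists>i\<le>n. \<exists>j\<le>1. d = p ^ i * q ^ j"
proof -
  obtain b c where d: "d = b * c" "b dvd p ^ n" "c dvd q" using division_decomp[OF assms(3)] by blast
  obtain i where i: "i \<le> n" "b = p ^ i" using d(2) divides_primepow_nat[OF assms(1)] by blast
  have "c = 1 \<or> c = q" using d(3) assms(2) prime_nat_iff by blast
  then obtain j where "j \<le> (1::nat)" "c = q ^ j" by (metis power_0 power_one_right le_refl zero_le)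
  then show ?thesis using d i by blast
qed

lemma NT2:
  fixes p q :: nat
  assumes "Factorial_Ring.prime p" "Factorial_Ring.prime q" "p \<noteq> q" "p ^ i * q ^ j dvd p ^ a * q ^ b"
  shows "i \<le> a \<and> j \<le> b"
proof -
  have "p ^ i dvd p ^ a * q ^ b" using assms(4) dvd_mult_left by blast
  then have "p ^ i dvd p ^ a" using ppow_coprime[OF assms(1-3)] coprime_dvd_mult_left_iff by blast
  then have 1: "i \<le> a" using dvd_power_iff_le prime_ge_2_nat[OF assms(1)] by blast
  have "q ^ j dvd p ^ a * q ^ b" using assms(4) dvd_mult_right by blast
  then have "q ^ j dvd q ^ b" using ppow_coprime[OF assms(2,1)] assms(3) coprime_dvd_mult_right_iff by metis
  then have 2: "j \<le> b" using dvd_power_iff_le prime_ge_2_nat[OF assms(2)] by blast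
  show ?thesis using 1 2 by simp
qed

lemma NT2':
  fixes p q :: nat
  assumes "i \<le> a" "j \<le> b"
  shows "p ^ i * q ^ j dvd p ^ a * q ^ b"
  using assms by (simp add: le_imp_power_dvd mult_dvd_mono)

lemma NT_gcd:
  fixes p q :: nat
  assumes "Factorial_Ring.prime p" "Factorial_Ring.prime q" "p \<noteq> q" "i \<le> n"
  shows "gcd (p ^ n) (p ^ i * q) = p ^ i"
proof -
  have "p ^ n = p ^ i * p ^ (n - i)" using assms(4) by (simp flip: power_add)
  then have "gcd (p ^ n) (p ^ i * q) = p ^ i * gcd (p ^ (n - i)) q"
    by (simp add: gcd_mult_distrib_nat)
  also have "gcd (p ^ (n - i)) q = 1" using ppow_coprime[OF assms(1-3), of "n - i" 1] by simp
  finally show ?thesis by simp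
qed



locale pnq = comm_group G for G (structure) +
  fixes p q n :: nat and g
  assumes pp: "Factorial_Ring.prime p" and qp: "Factorial_Ring.prime q" and pq: "p \<noteq> q"
    and n1: "n \<ge> 1" and ordG: "order G = p ^ n * q" and gc: "g \<in> carrier G"
    and ordg: "ord g = order G" and carr: "carrier G = (\<lambda>k. g [^] k) ` {..<order G}"
begin

definition Sub :: "nat \<Rightarrow> 'a set" where "Sub d = {x \<in> carrier G. x [^] d = \<one>}"

lemma Npos: "order G > 0"
  using ordG pp qp by (simp add: prime_gt_0_nat)

lemma fin: "finite (carrier G)"
  using Npos order_gt_0_iff_finite by blast

lemma Sub_subgroup: "subgroup (Sub d) G"
proof (rule subgroupI)
  show "Sub d \<subseteq> carrier G" unfolding Sub_def by auto
  show "Sub d \<noteq> {}" unfolding Sub_def using one_closed by (metis (mono_tags, lifting) empty_iff mem_Collect_eq nat_pow_one)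
next
  fix x assume "x \<in> Sub d" then show "inv x \<in> Sub d" unfolding Sub_def by (simp add: nat_pow_inv)
next
  fix x y assume "x \<in> Sub d" "y \<in> Sub d" then show "x \<otimes> y \<in> Sub d"
    unfolding Sub_def by (simp add: pow_mult_distrib m_comm)
qed

lemma Sub_Int: "Sub a \<inter> Sub b = Sub (gcd a b)"
  unfolding Sub_def using pow_eq_id by auto

lemma Sub_mono: "a dvd b \<Longrightarrow> Sub a \<subseteq> Sub b"
  unfolding Sub_def using pow_eq_id dvd_trans by blast

lemma Sub_N: "Sub (order G) = carrier G"
  unfolding Sub_def using pow_order_eq_1 by auto

lemma Sub_card:
  assumes "d dvd order G" shows "card (Sub d) = d"
proof -
  define m where "m = order G div d"
  have N: "order G = m * d" using assms unfolding m_def by simp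
  have dpos: "d > 0" "m > 0" using N Npos by auto
  have eq: "Sub d = (\<lambda>j. g [^] (m * j)) ` {..<d}"
  proof
    show "(\<lambda>j. g [^] (m * j)) ` {..<d} \<subseteq> Sub d"
    proof
      fix x assume "x \<in> (\<lambda>j. g [^] (m * j)) ` {..<d}"
      then obtain j where x: "x = g [^] (m * j)" by blast
      have "x [^] d = g [^] (m * j * d)" using x gc by (simp add: nat_pow_pow)
      also have "m * j * d = ord g * j" using N ordg by simp
      also have "g [^] (ord g * j) = \<one>" using gc pow_eq_id by simp
      finally show "x \<in> Sub d" unfolding Sub_def using x gc by simp
    qed
  next
    show "Sub d \<subseteq> (\<lambda>j. g [^] (m * j)) ` {..<d}"
    proof
      fix x assume x: "x \<in> Sub d"
      then obtain k where k: "k < order G" "x = g [^] k" unfolding Sub_def using carr by auto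
      have "g [^] (k * d) = \<one>" using x k gc unfolding Sub_def by (simp add: nat_pow_pow)
      then have "m * d dvd k * d" using pow_eq_id gc ordg N by simp
      then have "m dvd k" using dpos by simp
      then obtain j where j: "k = m * j" by blast
      have "j < d" using k(1) j N dpos by simp
      then show "x \<in> (\<lambda>j. g [^] (m * j)) ` {..<d}" using k j by blast
    qed
  qed
  have "inj_on (\<lambda>j. g [^] (m * j)) {..<d}"
  proof (rule inj_onI)
    fix i j assume ij: "i \<in> {..<d}" "j \<in> {..<d}" "g [^] (m * i) = g [^] (m * j)"
    have "m * i < order G" "m * j < order G" using ij N dpos by auto
    then have "m * i \<in> {0..ord g - 1}" "m * j \<in> {0..ord g - 1}" using ordg by auto
    then have "m * i = m * j" using ord_inj[OF gc] ij(3) unfolding inj_on_def by blast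
    then show "i = j" using dpos by simp
  qed
  then show ?thesis using eq card_image by fastforce
qed

lemma sub_dvd:
  assumes "subgroup H G" "subgroup K G" "H \<subseteq> K"
  shows "card H dvd card K"
proof -
  interpret K: group "G\<lparr>carrier := K\<rparr>" using subgroup_imp_group[OF assms(2)] .
  have "subgroup H (G\<lparr>carrier := K\<rparr>)" using subgroup_incl[OF assms] .
  from K.lagrange[OF this] show ?thesis unfolding order_def by (metis dvd_triv_right partial_object.select_convs(1) partial_object.surjective partial_object.update_convs(1))
qed

lemma card_dvd_N: "subgroup H G \<Longrightarrow> card H dvd order G"
  using lagrange by (metis dvd_triv_right)

lemma subgroup_Sub:
  assumes "subgroup H G" shows "H = Sub (card H)"
proof -
  interpret H: group "G\<lparr>carrier := H\<rparr>" using subgroup_imp_group[OF assms] .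
  have "H \<subseteq> Sub (card H)"
  proof
    fix x assume x: "x \<in> H"
    have "x [^]\<^bsub>G\<lparr>carrier := H\<rparr>\<^esub> order (G\<lparr>carrier := H\<rparr>) = \<one>\<^bsub>G\<lparr>carrier := H\<rparr>\<^esub>"
      using H.pow_order_eq_1 x by simp
    then have "x [^] card H = \<one>" unfolding order_def by (simp add: nat_pow_consistent[symmetric])
    then show "x \<in> Sub (card H)" unfolding Sub_def using x subgroup.subset[OF assms] by auto
  qed
  moreover have "card (Sub (card H)) = card H" using Sub_card card_dvd_N[OF assms] by simp
  moreover have "finite (Sub (card H))" using fin unfolding Sub_def by simp
  ultimately show ?thesis using card_subset_eq by metis
qed

end


context pnq begin

definition S2 :: "nat \<Rightarrow> nat \<Rightarrow> 'a set" where "S2 i j = Sub (p ^ i * q ^ j)"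

lemma S2_dvd: "i \<le> n \<Longrightarrow> j \<le> 1 \<Longrightarrow> p ^ i * q ^ j dvd order G"
  using NT2'[of i n j 1 p q] ordG by simp

lemma S2_subgroup: "subgroup (S2 i j) G"
  unfolding S2_def by (rule Sub_subgroup)

lemma S2_card: "i \<le> n \<Longrightarrow> j \<le> 1 \<Longrightarrow> card (S2 i j) = p ^ i * q ^ j"
  unfolding S2_def using Sub_card S2_dvd by simp

lemma S2_le_iff:
  assumes "i \<le> n" "j \<le> 1" "i' \<le> n" "j' \<le> 1"
  shows "S2 i j \<subseteq> S2 i' j' \<longleftrightarrow> i \<le> i' \<and> j \<le> j'"
proof
  assume h: "S2 i j \<subseteq> S2 i' j'"
  have "card (S2 i j) dvd card (S2 i' j')" by (rule sub_dvd[OF S2_subgroup S2_subgroup h])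
  then have "p ^ i * q ^ j dvd p ^ i' * q ^ j'"
    unfolding S2_card[OF assms(1,2)] S2_card[OF assms(3,4)] .
  then show "i \<le> i' \<and> j \<le> j'" by (rule NT2[OF pp qp pq])
next
  assume h: "i \<le> i' \<and> j \<le> j'"
  show "S2 i j \<subseteq> S2 i' j'" unfolding S2_def
    by (rule Sub_mono[OF NT2']) (use h in auto)
qed

lemma S2_inj:
  assumes "i \<le> n" "j \<le> 1" "i' \<le> n" "j' \<le> 1" "S2 i j = S2 i' j'"
  shows "i = i' \<and> j = j'"
  using S2_le_iff[OF assms(1-4)] S2_le_iff[OF assms(3,4,1,2)] assms(5) by auto

lemma S2_top: "S2 n 1 = carrier G"
  unfolding S2_def using Sub_N ordG by simp

lemma S2_classify:
  assumes "subgroup M G" shows "\<exists>i\<le>n. \<exists>j\<le>1. M = S2 i j"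
proof -
  have "card M dvd p ^ n * q" using card_dvd_N[OF assms] ordG by simp
  then obtain i j where ij: "i \<le> n" "j \<le> 1" "card M = p ^ i * q ^ j" using NT1[OF pp qp] by blast
  have "M = Sub (card M)" using subgroup_Sub[OF assms] .
  then show ?thesis using ij unfolding S2_def by auto
qed

lemma S2_Int:
  assumes "i \<le> n" "j \<le> 1" "i' \<le> n" "j' \<le> 1"
  shows "S2 i j \<inter> S2 i' j' = S2 (min i i') (min j j')"
proof -
  have "subgroup (S2 i j \<inter> S2 i' j') G" using S2_subgroup subgroups_Inter_pair by blast
  then obtain a b where ab: "a \<le> n" "b \<le> 1" "S2 i j \<inter> S2 i' j' = S2 a b" using S2_classify by blast
  have "S2 a b \<subseteq> S2 i j" "S2 a b \<subseteq> S2 i' j'" using ab(3) by auto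
  then have 1: "a \<le> min i i'" "b \<le> min j j'" using S2_le_iff ab assms by auto
  have "S2 (min i i') (min j j') \<subseteq> S2 i j" "S2 (min i i') (min j j') \<subseteq> S2 i' j'"
    using S2_le_iff assms by auto
  then have "S2 (min i i') (min j j') \<subseteq> S2 a b" using ab(3) by auto
  then have "min i i' \<le> a" "min j j' \<le> b" using S2_le_iff ab assms by auto
  then show ?thesis using 1 ab(3) by (metis le_antisym)
qed

definition cnd :: "('a set \<times> 'a set) set \<Rightarrow> bool" where
  "cnd S \<longleftrightarrow> (\<forall>i<n. \<exists>K. (S2 i 1, K) \<in> S \<and> S2 (Suc i) 1 \<subseteq> K) \<and> (S2 n 0, carrier G) \<in> S"

lemma gen_nec:
  assumes S: "S \<subseteq> arrows G" and gen: "ts_generated G S = arrows G"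
  shows "cnd S"
  unfolding cnd_def
proof (intro conjI allI impI)
  fix i assume i: "i < n"
  have cover: "M = S2 i 1 \<or> M = S2 (Suc i) 1" if Mh: "subgroup M G" "S2 i 1 \<subseteq> M" "M \<subseteq> S2 (Suc i) 1" for M
  proof -
    obtain a b where ab: "a \<le> n" "b \<le> 1" "M = S2 a b" using S2_classify[OF Mh(1)] by blast
    have h1: "S2 i 1 \<subseteq> S2 a b" "S2 a b \<subseteq> S2 (Suc i) 1" using Mh(2,3) unfolding ab(3) .
    have il: "i \<le> n" "Suc i \<le> n" using i by simp_all
    have "i \<le> a \<and> 1 \<le> b" using S2_le_iff[OF il(1) _ ab(1,2)] h1(1) by simp
    moreover have "a \<le> Suc i" using S2_le_iff[OF ab(1,2) il(2)] h1(2) by simp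
    ultimately have "a = i \<or> a = Suc i" "b = 1" using ab(2) by linarith+
    then show ?thesis unfolding ab(3) by blast
  qed
  have ne: "S2 i 1 \<noteq> S2 (Suc i) 1"
  proof
    assume "S2 i 1 = S2 (Suc i) 1"
    then have "i = Suc i" using S2_inj[of i 1 "Suc i" 1] i by simp
    then show False by simp
  qed
  have le: "S2 i 1 \<subseteq> S2 (Suc i) 1" using S2_le_iff i by simp
  obtain H K where HK: "(H, K) \<in> S" "S2 (Suc i) 1 \<subseteq> K" "H \<inter> S2 (Suc i) 1 = S2 i 1"
    using necessity[OF comm_group_axioms S gen S2_subgroup S2_subgroup le ne cover] by blast
  have "subgroup H G" using HK(1) S by (auto simp: arrows_def)
  then obtain a b where ab: "a \<le> n" "b \<le> 1" "H = S2 a b" using S2_classify by blast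
  have "S2 i 1 \<subseteq> H" using HK(3) by auto
  then have ib: "i \<le> a" "1 \<le> b" using S2_le_iff[of i 1 a b] ab i by auto
  have "a = i"
  proof (rule ccontr)
    assume "a \<noteq> i"
    then have "S2 (Suc i) 1 \<subseteq> H" using S2_le_iff[of "Suc i" 1 a b] ab ib i by auto
    then have "H \<inter> S2 (Suc i) 1 = S2 (Suc i) 1" by auto
    then show False using HK(3) ne by simp
  qed
  then have "H = S2 i 1" using ab ib by auto
  then show "\<exists>K. (S2 i 1, K) \<in> S \<and> S2 (Suc i) 1 \<subseteq> K" using HK by blast
next
  have cover: "M = S2 n 0 \<or> M = S2 n 1" if Mh: "subgroup M G" "S2 n 0 \<subseteq> M" "M \<subseteq> S2 n 1" for M
  proof -
    obtain a b where ab: "a \<le> n" "b \<le> 1" "M = S2 a b" using S2_classify[OF Mh(1)] by blast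
    have h1: "S2 n 0 \<subseteq> S2 a b" using Mh(2) unfolding ab(3) .
    have "n \<le> a" using S2_le_iff[OF le_refl _ ab(1,2)] h1 by simp
    then have "a = n" "b = 0 \<or> b = 1" using ab(1,2) by linarith+
    then show ?thesis unfolding ab(3) by blast
  qed
  have ne: "S2 n 0 \<noteq> S2 n 1"
  proof
    assume "S2 n 0 = S2 n 1"
    then have "(0::nat) = 1" using S2_inj[of n 0 n 1] by simp
    then show False by simp
  qed
  have le: "S2 n 0 \<subseteq> S2 n 1" using S2_le_iff by simp
  obtain H K where HK: "(H, K) \<in> S" "S2 n 1 \<subseteq> K" "H \<inter> S2 n 1 = S2 n 0"
    using necessity[OF comm_group_axioms S gen S2_subgroup S2_subgroup le ne cover] by blast
  have "subgroup H G" "subgroup K G" using HK(1) S by (auto simp: arrows_def)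
  then have "K \<subseteq> carrier G" "H \<subseteq> carrier G" using subgroup.subset by auto
  then have "K = carrier G" "H = S2 n 0" using HK S2_top by auto
  then show "(S2 n 0, carrier G) \<in> S" using HK(1) by simp
qed

lemma gen_suf:
  assumes S: "S \<subseteq> arrows G" and c: "cnd S"
  shows "ts_generated G S = arrows G"
proof -
  define T where "T = ts_generated G S"
  have ts: "transfer_system G T" unfolding T_def using ts_generated_ts[OF comm_group_axioms S] .
  have ST: "S \<subseteq> T" unfolding T_def by (rule ts_generated_sub)
  have Tarr: "T \<subseteq> arrows G" unfolding T_def using ts_generated_arrows[OF comm_group_axioms S] .
  have idT: "(H, H) \<in> T" if "subgroup H G" for H using ts that unfolding transfer_system_def by blast
  have comp: "(X1, Z) \<in> T" if "(X1, Y) \<in> T" "(Y, Z) \<in> T" for X1 Y Z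
    using ts that unfolding transfer_system_def by blast
  have restr: "(H \<inter> L, L) \<in> T" if "(H, K) \<in> T" "subgroup L G" "L \<subseteq> K" for H K L
    using ts that unfolding transfer_system_def by blast
  have V: "(S2 i 0, S2 i 1) \<in> T" if "i \<le> n" for i
  proof -
    have "(S2 n 0, S2 n 1) \<in> T" using c ST S2_top unfolding cnd_def by auto
    moreover have "S2 i 1 \<subseteq> S2 n 1" using S2_le_iff that by simp
    ultimately have "(S2 n 0 \<inter> S2 i 1, S2 i 1) \<in> T" using restr S2_subgroup by blast
    moreover have "S2 n 0 \<inter> S2 i 1 = S2 i 0" using S2_Int that by (simp add: min_def)
    ultimately show ?thesis by simp
  qed
  have Hs: "(S2 i j, S2 (Suc i) j) \<in> T" if "i < n" "j \<le> 1" for i j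
  proof -
    have "\<exists>K. (S2 i 1, K) \<in> S \<and> S2 (Suc i) 1 \<subseteq> K" using c that(1) unfolding cnd_def by blast
    then obtain K where K: "(S2 i 1, K) \<in> S" "S2 (Suc i) 1 \<subseteq> K" by blast
    have "S2 (Suc i) j \<subseteq> S2 (Suc i) 1" using S2_le_iff that by simp
    then have "(S2 i 1 \<inter> S2 (Suc i) j, S2 (Suc i) j) \<in> T" using restr K ST S2_subgroup by blast
    moreover have "S2 i 1 \<inter> S2 (Suc i) j = S2 i j" using S2_Int that by (simp add: min_def)
    ultimately show ?thesis by simp
  qed
  have chain: "i + k \<le> n \<Longrightarrow> (S2 i j, S2 (i + k) j) \<in> T" if "j \<le> 1" for i j k
  proof (induction k)
    case 0 then show ?case using idT S2_subgroup by simp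
  next
    case (Suc k)
    then have "(S2 i j, S2 (i + k) j) \<in> T" by simp
    moreover have "(S2 (i + k) j, S2 (Suc (i + k)) j) \<in> T" using Hs Suc that by simp
    ultimately show ?case using comp by simp
  qed
  have all: "(S2 i j, S2 i' j') \<in> T" if "i \<le> i'" "i' \<le> n" "j \<le> j'" "j' \<le> 1" for i j i' j'
  proof -
    have ch: "(S2 i j, S2 i' j) \<in> T" using chain[of j i "i' - i"] that by simp
    show ?thesis
    proof (cases "j = j'")
      case True then show ?thesis using ch by simp
    next
      case False
      then have "j = 0" "j' = 1" using that by auto
      then show ?thesis using ch V[of i'] that comp by blast
    qed
  qed
  have "arrows G \<subseteq> T"
  proof
    fix x assume "x \<in> arrows G"
    then obtain H K where x: "x = (H, K)" "subgroup H G" "subgroup K G" "H \<subseteq> K"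
      unfolding arrows_def by auto
    obtain i j where ij: "i \<le> n" "j \<le> 1" "H = S2 i j" using S2_classify[OF x(2)] by blast
    obtain i' j' where ij': "i' \<le> n" "j' \<le> 1" "K = S2 i' j'" using S2_classify[OF x(3)] by blast
    have "i \<le> i'" "j \<le> j'" using S2_le_iff ij ij' x(4) by auto
    then show "x \<in> T" using all ij ij' x(1) by simp
  qed
  then show ?thesis using Tarr unfolding T_def by blast
qed

lemma mgs_card:
  assumes m: "minimal_generating_set G (arrows G) S"
  shows "card S = n + 1"
proof -
  have S: "S \<subseteq> arrows G" and gen: "ts_generated G S = arrows G"
    and mn: "\<And>s. s \<in> S \<Longrightarrow> ts_generated G (S - {s}) \<noteq> arrows G"
    using m unfolding minimal_generating_set_def by auto
  have c: "cnd S" using gen_nec[OF S gen] .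
  define Kf where "Kf i = (SOME K. (S2 i 1, K) \<in> S \<and> S2 (Suc i) 1 \<subseteq> K)" for i
  have Kf: "(S2 i 1, Kf i) \<in> S \<and> S2 (Suc i) 1 \<subseteq> Kf i" if "i < n" for i
    unfolding Kf_def by (rule someI_ex) (use c that in \<open>auto simp: cnd_def\<close>)
  define S' where "S' = (\<lambda>i. (S2 i 1, Kf i)) ` {..<n} \<union> {(S2 n 0, carrier G)}"
  have S'S: "S' \<subseteq> S" unfolding S'_def using Kf c by (auto simp: cnd_def)
  have cS': "cnd R" if "S' \<subseteq> R" for R
    using that Kf unfolding cnd_def S'_def by blast
  have "S = S'"
  proof (rule ccontr)
    assume "S \<noteq> S'"
    then obtain s where s: "s \<in> S" "s \<notin> S'" using S'S by blast
    then have "S' \<subseteq> S - {s}" using S'S by blast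
    then have "ts_generated G (S - {s}) = arrows G" using gen_suf[OF _ cS'] S by blast
    then show False using mn s(1) by blast
  qed
  have inj: "inj_on (\<lambda>i. (S2 i 1, Kf i)) {..<n}"
  proof (rule inj_onI)
    fix i j assume ij: "i \<in> {..<n}" "j \<in> {..<n}" "(S2 i 1, Kf i) = (S2 j 1, Kf j)"
    then have "S2 i 1 = S2 j 1" by simp
    then show "i = j" using S2_inj[of i 1 j 1] ij(1,2) by simp
  qed
  have notin: "(S2 n 0, carrier G) \<notin> (\<lambda>i. (S2 i 1, Kf i)) ` {..<n}"
  proof
    assume "(S2 n 0, carrier G) \<in> (\<lambda>i. (S2 i 1, Kf i)) ` {..<n}"
    then obtain i where i: "i < n" "S2 n 0 = S2 i 1" by auto
    then show False using S2_inj[of n 0 i 1] by simp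
  qed
  have "card S' = n + 1"
    unfolding S'_def using card_image[OF inj] notin by simp
  then show ?thesis using \<open>S = S'\<close> by simp
qed

lemma mgs_exists: "\<exists>S. minimal_generating_set G (arrows G) S"
proof -
  define S0 where "S0 = (\<lambda>i. (S2 i 1, S2 (Suc i) 1)) ` {..<n} \<union> {(S2 n 0, carrier G)}"
  have arr: "S0 \<subseteq> arrows G"
  proof -
    have "(S2 i 1, S2 (Suc i) 1) \<in> arrows G" if "i < n" for i
      unfolding arrows_def using S2_subgroup S2_le_iff[of i 1 "Suc i" 1] that by simp
    moreover have "(S2 n 0, carrier G) \<in> arrows G"
    proof -
      have "S2 n 0 \<subseteq> S2 n 1" using S2_le_iff[of n 0 n 1] by simp
      then show ?thesis unfolding arrows_def using S2_subgroup[of n 0] S2_subgroup[of n 1] S2_top by simp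
    qed
    ultimately show ?thesis unfolding S0_def by blast
  qed
  have neq: "\<forall>s\<in>S0. fst s \<noteq> snd s"
  proof
    fix s assume "s \<in> S0"
    then consider (a) i where "i < n" "s = (S2 i 1, S2 (Suc i) 1)" | (b) "s = (S2 n 0, carrier G)"
      unfolding S0_def by blast
    then show "fst s \<noteq> snd s"
    proof cases
      case a then show ?thesis using S2_inj[of i 1 "Suc i" 1] by auto
    next
      case b then show ?thesis using S2_inj[of n 0 n 1] S2_top by auto
    qed
  qed
  have c: "cnd S0" unfolding cnd_def
  proof (intro conjI allI impI)
    fix i assume "i < n"
    then have "(S2 i 1, S2 (Suc i) 1) \<in> S0" unfolding S0_def by blast
    then show "\<exists>K. (S2 i 1, K) \<in> S0 \<and> S2 (Suc i) 1 \<subseteq> K" by blast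
  next
    show "(S2 n 0, carrier G) \<in> S0" unfolding S0_def by blast
  qed
  have gen: "ts_generated G S0 = arrows G" using gen_suf[OF arr c] .
  have mn: "ts_generated G (S0 - {s}) \<noteq> arrows G" if s: "s \<in> S0" for s
  proof
    assume "ts_generated G (S0 - {s}) = arrows G"
    moreover have "S0 - {s} \<subseteq> arrows G" using arr by blast
    ultimately have c': "cnd (S0 - {s})" using gen_nec by blast
    from s consider (a) i where "i < n" "s = (S2 i 1, S2 (Suc i) 1)" | (b) "s = (S2 n 0, carrier G)"
      unfolding S0_def by blast
    then show False
    proof cases
      case a
      then obtain K where K: "(S2 i 1, K) \<in> S0 - {s}" using c' unfolding cnd_def by blast
      then have "(S2 i 1, K) \<in> S0" "(S2 i 1, K) \<noteq> s" by auto
      then consider (a1) j where "j < n" "(S2 i 1, K) = (S2 j 1, S2 (Suc j) 1)"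
        | (b1) "(S2 i 1, K) = (S2 n 0, carrier G)"
        unfolding S0_def by blast
      then show False
      proof cases
        case a1
        then have "i = j" using S2_inj[of i 1 j 1] a(1) by auto
        then show False using a1 a \<open>(S2 i 1, K) \<noteq> s\<close> by auto
      next
        case b1 then show False using S2_inj[of i 1 n 0] a(1) by auto
      qed
    next
      case b
      have "(S2 n 0, carrier G) \<in> S0 - {s}" using c' unfolding cnd_def by (rule conjunct2)
      then show False using b by simp
    qed
  qed
  have "minimal_generating_set G (arrows G) S0"
    unfolding minimal_generating_set_def using arr neq gen mn by blast
  then show ?thesis by blast
qed

lemma width_pnq: "width G = n + 1"
proof -
  have "minimal_generating_set G (arrows G) (SOME S. minimal_generating_set G (arrows G) S)"
    using mgs_exists by (rule someI_ex)
  then show ?thesis unfolding width_def mgen_card_def using mgs_card by blast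
qed

end

theorem lemma6p1:
  fixes G :: "('a, 'b) monoid_scheme" and p q n :: nat
  assumes "group G" and "cyclic_group G"
    and "Factorial_Ring.prime p" and "Factorial_Ring.prime q" and "p \<noteq> q" and "n \<ge> 1"
    and "order G = p ^ n * q"
  shows "width G = n + 1"
proof -
  interpret group G by fact
  have cg: "comm_group G" using cyclic_imp_abelian_group assms(2) .
  have "order G > 0" using assms(3,4,7) by (simp add: prime_gt_0_nat)
  then have fin: "finite (carrier G)" using order_gt_0_iff_finite by blast
  obtain g where g: "g \<in> carrier G" "subgroup_generated G {g} = G"
    using assms(2) unfolding cyclic_group_def by blast
  have ordg: "ord g = order G" using cyclic_order_is_ord[OF g(1)] g(2) by simp
  have "ord g \<ge> 1" using ord_ge_1[OF fin g(1)] .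
  then have rng: "{0..ord g - 1} = {..<order G}" using ordg by auto
  have "carrier G = carrier (subgroup_generated G {g})" using g(2) by simp
  also have "\<dots> = generate G {g}" using g(1) by (simp add: carrier_subgroup_generated)
  also have "\<dots> = {g [^]\<^bsub>G\<^esub> k | k. k \<in> (UNIV :: nat set)}"
    using generate_pow_on_finite_carrier[OF fin g(1)] .
  also have "\<dots> = {g [^]\<^bsub>G\<^esub> x | x. x \<in> {0..ord g - 1}}" using ord_elems[OF fin g(1)] .
  also have "\<dots> = (\<lambda>k. g [^]\<^bsub>G\<^esub> k) ` {..<order G}" unfolding rng by auto
  finally have carr: "carrier G = (\<lambda>k. g [^]\<^bsub>G\<^esub> (k::nat)) ` {..<order G}" .
  have "pnq G p q n g"
    unfolding pnq_def pnq_axioms_def using cg assms g(1) ordg carr by blast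
  then show ?thesis by (rule pnq.width_pnq)
qed

end
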